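(* Let $n\ge1$. The matrix $D^n$ is positive semi-definite. For $j,k\in\{0,\dots,2^n-1\}$: $D^n_{jk}=0$ if $j,k$ have different parity; if $j,k$ have the same parity then $D^n_{jk}=1/2^n$ when $c_n(j)\equiv c_n(k)\pmod 4$ and $D^n_{jk}=-1/2^n$ when $c_n(j)\not\equiv c_n(k)\pmod 4$. Moreover $\sum_{j,k}D^n_{jk}=1$.
   Context: For $n\ge1$, an $n$-path is a string $\alpha_0\alpha_1\cdots\alpha_n$ with $\alpha_k\in\{0,1\}$, $\alpha_0=0$; the set $\Omega_n$ of $n$-paths is identified with $\{0,1,\dots,2^n-1\}$, the path $\omega_j$ (or simply $j$) being the one whose string $\alpha_0\cdots\alpha_n$ is the binary representation of $j$ (with $\alpha_n$ least significant). $D^n$ is the $2^n\times2^n$ matrix with entries $D^n_{jk}=D^n(\omega_j,\omega_k)$, where for $\omega=\alpha_0\cdots\alpha_n$, $\omega'=\alpha'_0\cdots\alpha'_n$, $D^n(\omega,\omega')=2^{-n}\prod_{k=1}^n i^{|\alpha_k-\alpha_{k-1}|}\prod_{k=1}^n i^{-|\alpha'_k-\alpha'_{k-1}|}\,\delta_{\alpha_n\alpha'_n}$ ($i=\sqrt{-1}$). $c_n(j)$ denotes the number of position changes of the path $\omega_j$, i.e. the number of $k\in\{1,\dots,n\}$ with $\alpha_k\ne\alpha_{k-1}$. *)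

theory Defs
  imports Complex_Main
begin

text \<open>The n-path omega_j, j < 2^n, is the string alpha_0 ... alpha_n given by the
  binary representation of j (alpha_n least significant): alpha_k = bit (n-k) of j.\<close>
definition path_bit :: "nat \<Rightarrow> nat \<Rightarrow> nat \<Rightarrow> nat" where
  "path_bit n j k = (j div 2 ^ (n - k)) mod 2"

definition path_phase :: "nat \<Rightarrow> nat \<Rightarrow> complex" where
  "path_phase n j = (\<Prod>k\<in>{1..n}.
      \<i> ^ nat \<bar>int (path_bit n j k) - int (path_bit n j (k - 1))\<bar>)"

text \<open>Matrix entry D^n_{jk}; the second product uses exponents -|...|, i.e. the inverse.\<close>
definition Dmat :: "nat \<Rightarrow> nat \<Rightarrow> nat \<Rightarrow> complex" where
  "Dmat n j k = (1 / 2 ^ n) * path_phase n j * inverse (path_phase n k)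
      * (if path_bit n j n = path_bit n k n then 1 else 0)"

definition changes :: "nat \<Rightarrow> nat \<Rightarrow> nat" where
  "changes n j = card {k \<in> {1..n}. path_bit n j k \<noteq> path_bit n j (k - 1)}"

definition psd_mat :: "nat \<Rightarrow> (nat \<Rightarrow> nat \<Rightarrow> complex) \<Rightarrow> bool" where
  "psd_mat N A \<longleftrightarrow>
     (\<forall>j<N. \<forall>k<N. A k j = cnj (A j k)) \<and>
     (\<forall>v :: nat \<Rightarrow> complex.
        Im (\<Sum>j<N. \<Sum>k<N. cnj (v j) * A j k * v k) = 0 \<and>
        Re (\<Sum>j<N. \<Sum>k<N. cnj (v j) * A j k * v k) \<ge> 0)"

end

theory Submission imports Defs begin

lemma path_bit_le1: "path_bit n j k \<le> 1"
  unfolding path_bit_def by simp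

lemma phase_changes: "path_phase n j = \<i> ^ changes n j"
proof -
  have "path_phase n j = (\<Prod>k\<in>{1..n}. if path_bit n j k \<noteq> path_bit n j (k - 1) then \<i> else 1)"
    unfolding path_phase_def
  proof (rule prod.cong[OF refl])
    fix k
    have a: "path_bit n j k \<le> 1" "path_bit n j (k-1) \<le> 1" by (rule path_bit_le1)+
    show "\<i> ^ nat \<bar>int (path_bit n j k) - int (path_bit n j (k - 1))\<bar> =
      (if path_bit n j k \<noteq> path_bit n j (k - 1) then \<i> else 1)"
      using a by (cases "path_bit n j k"; cases "path_bit n j (k-1)") auto
  qed
  also have "\<dots> = \<i> ^ changes n j"
    unfolding changes_def by (simp add: prod.If_cases Int_def)
  finally show ?thesis .
qed

lemma path_bit_Suc: "k \<le> n \<Longrightarrow> path_bit (Suc n) j k = path_bit n (j div 2) k"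
  unfolding path_bit_def by (simp add: Suc_diff_le div_mult2_eq)

lemma path_bit_last: "path_bit n j n = j mod 2"
  unfolding path_bit_def by simp

lemma changes_Suc: "changes (Suc n) j = changes n (j div 2) + (if j mod 2 \<noteq> (j div 2) mod 2 then 1 else 0)"
proof -
  let ?P = "\<lambda>n j k. path_bit n j k \<noteq> path_bit n j (k - 1)"
  have "{k \<in> {1..Suc n}. ?P (Suc n) j k} = {k \<in> {1..n}. ?P n (j div 2) k} \<union> (if j mod 2 \<noteq> (j div 2) mod 2 then {Suc n} else {})"
  proof (intro set_eqI iffI)
    fix k assume "k \<in> {k \<in> {1..Suc n}. ?P (Suc n) j k}"
    then show "k \<in> {k \<in> {1..n}. ?P n (j div 2) k} \<union> (if j mod 2 \<noteq> (j div 2) mod 2 then {Suc n} else {})"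
    proof (cases "k = Suc n")
      case True
      then show ?thesis using \<open>k \<in> _\<close> path_bit_Suc[of n n j] path_bit_last[of n "j div 2"] path_bit_last[of "Suc n" j] by auto
    next
      case False
      then have "k \<le> n" "k - 1 \<le> n" using \<open>k \<in> _\<close> by auto
      then show ?thesis using \<open>k \<in> _\<close> path_bit_Suc[of k n j] path_bit_Suc[of "k-1" n j] by auto
    qed
  next
    fix k assume k: "k \<in> {k \<in> {1..n}. ?P n (j div 2) k} \<union> (if j mod 2 \<noteq> (j div 2) mod 2 then {Suc n} else {})"
    show "k \<in> {k \<in> {1..Suc n}. ?P (Suc n) j k}"
    proof (cases "k = Suc n")
      case True
      then show ?thesis using k path_bit_Suc[of n n j] path_bit_last[of n "j div 2"] path_bit_last[of "Suc n" j] by (auto split: if_splits)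
    next
      case False
      then have "k \<le> n" "k - 1 \<le> n" "k \<in> {1..n}" "?P n (j div 2) k" using k by (auto split: if_splits)
      then show ?thesis using path_bit_Suc[of k n j] path_bit_Suc[of "k-1" n j] by auto
    qed
  qed
  then show ?thesis unfolding changes_def by (simp add: card_insert_if)
qed

lemma changes_parity: "j < 2 ^ n \<Longrightarrow> changes n j mod 2 = j mod 2"
proof (induction n arbitrary: j)
  case 0
  then show ?case by (simp add: changes_def)
next
  case (Suc n)
  have "j div 2 < 2 ^ n" using Suc.prems by auto
  from Suc.IH[OF this] have ih: "changes n (j div 2) mod 2 = j div 2 mod 2" .
  have "j mod 2 = 0 \<or> j mod 2 = 1" "j div 2 mod 2 = 0 \<or> j div 2 mod 2 = 1" by auto
  then show ?case using ih unfolding changes_Suc by (auto simp: mod_Suc)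
qed

lemma inv_i_pow: "inverse (\<i> ^ c) = cnj (\<i> ^ c)"
  by (induction c) (auto simp: inverse_mult_distrib)

lemma i_pow_mod4: "\<i> ^ a = \<i> ^ (a mod 4)"
proof -
  have "\<i> ^ a = \<i> ^ (4 * (a div 4) + a mod 4)" by simp
  also have "\<dots> = (\<i> ^ 4) ^ (a div 4) * \<i> ^ (a mod 4)" by (simp only: power_add power_mult)
  also have "\<i> ^ 4 = (1::complex)" by (simp add: numeral_eq_Suc)
  finally show ?thesis by simp
qed

lemma i3: "\<i> ^ 3 = - \<i>"
  by (simp add: numeral_3_eq_3)

lemma i_pow_prod:
  assumes "a mod 2 = (b::nat) mod 2"
  shows "\<i> ^ a * cnj (\<i> ^ b) = (if a mod 4 = b mod 4 then 1 else -1)"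
proof -
  define x where "x = a mod 4"
  define y where "y = b mod 4"
  have xy: "x mod 2 = y mod 2" using assms unfolding x_def y_def by (simp add: mod_mod_cancel)
  have "x \<in> {0,1,2,3}" "y \<in> {0,1,2,3}" unfolding x_def y_def by auto
  then have "\<i> ^ x * cnj (\<i> ^ y) = (if x = y then 1 else -1)"
    using xy by (auto simp: i3)
  then show ?thesis using i_pow_mod4[of a] i_pow_mod4[of b] unfolding x_def y_def by simp
qed

lemma parity_split:
  fixes a b :: "nat \<Rightarrow> complex"
  shows "(\<Sum>j<N. \<Sum>k<N. if j mod 2 = k mod 2 then a j * b k else 0) =
    (\<Sum>j<N. if even j then a j else 0) * (\<Sum>k<N. if even k then b k else 0) +
    (\<Sum>j<N. if odd j then a j else 0) * (\<Sum>k<N. if odd k then b k else 0)"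
  unfolding sum_product sum.distrib[symmetric]
  by (intro sum.cong refl) (auto simp: even_iff_mod_2_eq_zero odd_iff_mod_2_eq_one)

lemma sum_double: "(\<Sum>j<2*(m::nat). f j) = (\<Sum>j<m. f (2*j) + f (2*j+1))"
  by (induction m) (simp_all add: algebra_simps)

definition EvS :: "nat \<Rightarrow> complex" where "EvS n = (\<Sum>j<2^n. if even j then \<i> ^ changes n j else 0)"
definition OdS :: "nat \<Rightarrow> complex" where "OdS n = (\<Sum>j<2^n. if odd j then \<i> ^ changes n j else 0)"

lemma EvS_Suc: "EvS (Suc n) = EvS n + \<i> * OdS n"
proof -
  have "EvS (Suc n) = (\<Sum>j<2^n. \<i> ^ changes (Suc n) (2*j))"
    unfolding EvS_def by (simp add: sum_double)
  also have "\<dots> = (\<Sum>j<2^n. (if even j then \<i> ^ changes n j else 0) + \<i> * (if odd j then \<i> ^ changes n j else 0))"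
    by (intro sum.cong refl) (auto simp: changes_Suc even_iff_mod_2_eq_zero)
  finally show ?thesis unfolding EvS_def OdS_def by (simp add: sum.distrib sum_distrib_left)
qed

lemma OdS_Suc: "OdS (Suc n) = \<i> * EvS n + OdS n"
proof -
  have "OdS (Suc n) = (\<Sum>j<2^n. \<i> ^ changes (Suc n) (2*j+1))"
    unfolding OdS_def by (simp add: sum_double)
  also have "\<dots> = (\<Sum>j<2^n. \<i> * (if even j then \<i> ^ changes n j else 0) + (if odd j then \<i> ^ changes n j else 0))"
    by (intro sum.cong refl) (auto simp: changes_Suc even_iff_mod_2_eq_zero)
  finally show ?thesis unfolding EvS_def OdS_def by (simp add: sum.distrib sum_distrib_left)
qed

lemma EO_norm: "EvS n * cnj (EvS n) + OdS n * cnj (OdS n) = 2 ^ n"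
proof (induction n)
  case 0
  then show ?case by (simp add: EvS_def OdS_def changes_def)
next
  case (Suc n)
  have "EvS (Suc n) * cnj (EvS (Suc n)) + OdS (Suc n) * cnj (OdS (Suc n)) =
     2 * (EvS n * cnj (EvS n) + OdS n * cnj (OdS n))"
    unfolding EvS_Suc OdS_Suc by (simp add: algebra_simps)
  then show ?case using Suc by simp
qed

lemma Dmat_eq: "j < 2^n \<Longrightarrow> Dmat n j k =
  (if j mod 2 = k mod 2 then (1 / 2 ^ n) * (\<i> ^ changes n j * cnj (\<i> ^ changes n k)) else 0)"
  unfolding Dmat_def phase_changes inv_i_pow path_bit_last by simp

lemma quad_nonneg: "Im (z * cnj z) = 0 \<and> Re (z * cnj z) \<ge> 0"
  by (simp add: complex_mult_cnj)

theorem theorem2p1: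
  fixes n :: nat
  assumes "n \<ge> 1"
  shows "psd_mat (2 ^ n::nat) (Dmat n)
    \<and> (\<forall>j < 2 ^ n. \<forall>k < 2 ^ n.
         (j mod 2 \<noteq> k mod 2 \<longrightarrow> Dmat n j k = 0) \<and>
         (j mod 2 = k mod 2 \<longrightarrow>
            (changes n j mod 4 = changes n k mod 4 \<longrightarrow> Dmat n j k = 1 / 2 ^ n) \<and>
            (\<not> changes n j mod 4 = changes n k mod 4 \<longrightarrow> Dmat n j k = - 1 / 2 ^ n)))
    \<and> (\<Sum>j < 2 ^ n. \<Sum>k < 2 ^ n. Dmat n j k) = 1"
proof (intro conjI allI impI)
  show "psd_mat (2 ^ n::nat) (Dmat n)"
    unfolding psd_mat_def
  proof (intro conjI allI impI)
    fix j k assume "j < (2 ^ n::nat)" "k < (2 ^ n::nat)"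
    then show "Dmat n k j = cnj (Dmat n j k)" by (simp add: Dmat_eq)
  next
    fix v :: "nat \<Rightarrow> complex"
    define T0 where "T0 = (\<Sum>j<(2 ^ n::nat). if even j then cnj (v j) * (\<i> ^ changes n j) else 0)"
    define T1 where "T1 = (\<Sum>j<(2 ^ n::nat). if odd j then cnj (v j) * (\<i> ^ changes n j) else 0)"
    have "(\<Sum>j<(2 ^ n::nat). \<Sum>k<(2 ^ n::nat). cnj (v j) * Dmat n j k * v k) =
       (1 / 2 ^ n) * (\<Sum>j<(2 ^ n::nat). \<Sum>k<(2 ^ n::nat). if j mod 2 = k mod 2 then (cnj (v j) * (\<i> ^ changes n j)) * (cnj ((\<i> ^ changes n k)) * v k) else 0)"
      unfolding sum_distrib_left
      by (intro sum.cong refl) (auto simp: Dmat_eq algebra_simps)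
    also have "\<dots> = (1 / 2 ^ n) * (T0 * cnj T0 + T1 * cnj T1)"
    proof -
      have a: "(\<Sum>k<(2 ^ n::nat). if even k then cnj ((\<i> ^ changes n k)) * v k else 0) = cnj T0"
        unfolding T0_def cnj_sum by (intro sum.cong refl) auto
      have b: "(\<Sum>k<(2 ^ n::nat). if odd k then cnj ((\<i> ^ changes n k)) * v k else 0) = cnj T1"
        unfolding T1_def cnj_sum by (intro sum.cong refl) auto
      show ?thesis unfolding parity_split a b T0_def[symmetric] T1_def[symmetric] ..
    qed
    finally have eq: "(\<Sum>j<(2 ^ n::nat). \<Sum>k<(2 ^ n::nat). cnj (v j) * Dmat n j k * v k) = (1 / 2 ^ n) * (T0 * cnj T0 + T1 * cnj T1)" .
    show "Im (\<Sum>j<(2 ^ n::nat). \<Sum>k<(2 ^ n::nat). cnj (v j) * Dmat n j k * v k) = 0"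
      unfolding eq using quad_nonneg[of T0] quad_nonneg[of T1] by simp
    show "Re (\<Sum>j<(2 ^ n::nat). \<Sum>k<(2 ^ n::nat). cnj (v j) * Dmat n j k * v k) \<ge> 0"
      unfolding eq using quad_nonneg[of T0] quad_nonneg[of T1] by simp
  qed
next
  fix j k assume "j < (2 ^ n::nat)" "k < (2 ^ n::nat)"
  {
    assume "j mod 2 \<noteq> k mod 2"
    then show "Dmat n j k = 0" using \<open>j < (2 ^ n::nat)\<close> by (simp add: Dmat_eq)
  }
  assume p: "j mod 2 = k mod 2"
  have cp: "changes n j mod 2 = changes n k mod 2"
    using p changes_parity[OF \<open>j < (2 ^ n::nat)\<close>] changes_parity[OF \<open>k < (2 ^ n::nat)\<close>] by simp
  {
    assume "changes n j mod 4 = changes n k mod 4"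
    then show "Dmat n j k = 1 / 2 ^ n" using p \<open>j < (2 ^ n::nat)\<close> i_pow_prod[OF cp] by (simp add: Dmat_eq)
  next
    assume "\<not> changes n j mod 4 = changes n k mod 4"
    then show "Dmat n j k = - 1 / 2 ^ n" using p \<open>j < (2 ^ n::nat)\<close> i_pow_prod[OF cp] by (simp add: Dmat_eq)
  }
next
  have "(\<Sum>j<(2 ^ n::nat). \<Sum>k<(2 ^ n::nat). Dmat n j k) =
       (1 / 2 ^ n) * (\<Sum>j<(2 ^ n::nat). \<Sum>k<(2 ^ n::nat). if j mod 2 = k mod 2 then (\<i> ^ changes n j) * cnj ((\<i> ^ changes n k)) else 0)"
    unfolding sum_distrib_left
    by (intro sum.cong refl) (auto simp: Dmat_eq)
  also have "\<dots> = (1 / 2 ^ n) * (EvS n * cnj (EvS n) + OdS n * cnj (OdS n))"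
    unfolding parity_split EvS_def OdS_def cnj_sum if_distrib[of cnj] complex_cnj_zero ..
  also have "\<dots> = 1" by (simp add: EO_norm)
  finally show "(\<Sum>j<(2 ^ n::nat). \<Sum>k<(2 ^ n::nat). Dmat n j k) = 1" .
qed

end
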